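(* Let $p$ be a polynomial of degree $m$ with $p(t)=dt^m+O(t^{m-1})$, let $q$ be a polynomial of degree $d\ge1$ with $q(t)=t^d+O(t^{d-1})$ as $t\to\infty$, let $c\in\mathbb{C}$, $g(z)=\int_0^zp(t)e^{q(t)}dt+c$, and $f(z)=z-g(z)/g'(z)$. Let $\lambda=(d-1-m)/d$. Let $R>0$ be such that all critical values of $q$ lie in $D(0,R)$ and $2^{-d}|z|^d\le|q(z)|\le2^d|z|^d$ for $|z|\ge\frac12R^{1/d}$, let $G=\mathbb{C}\setminus(\overline{D(0,R)}\cup[0,\infty))$, let $S$ be a component of $q^{-1}(G)$, let $\varphi$ be the branch of $q^{-1}$ on $G$ with $\varphi(G)=S$, and let $c_S=\lim_{x\to-\infty,\,x\in(-\infty,-R)}g(\varphi(x))$. Then $$f(\varphi(w))=\varphi(w)-\frac{1}{q'(\varphi(w))}\Big(1+\frac{\lambda}{w}+O\big(|w|^{-1-1/d}\big)\Big)-\frac{c_Se^{-w}}{p(\varphi(w))}$$ as $w\to\infty$ in $G$.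
   Context: $D(z_0,r)$ is the open disk. The limit defining $c_S$ exists; $c_S$ is the (unique) constant for which $g(\varphi(w))=c_S+\frac{p(\varphi(w))}{q'(\varphi(w))}(1+\lambda/w+O(|w|^{-1-1/d}))e^w$ as $w\to\infty$ in $G$. *)

theory Defs
  imports "HOL-Complex_Analysis.Complex_Analysis" "HOL-Computational_Algebra.Polynomial"
    "HOL-Library.Landau_Symbols"
begin

text \<open>The entire function g(z) = integral from 0 to z of p(t) e^(q(t)) dt + c,
  the integral taken along the segment [0,z] (path independent, integrand entire).\<close>
definition gfun :: "complex poly \<Rightarrow> complex poly \<Rightarrow> complex \<Rightarrow> complex \<Rightarrow> complex" where
  "gfun p q c z = contour_integral (linepath 0 z) (\<lambda>t. poly p t * exp (poly q t)) + c"

definition newton_f :: "complex poly \<Rightarrow> complex poly \<Rightarrow> complex \<Rightarrow> complex \<Rightarrow> complex" where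
  "newton_f p q c z = z - gfun p q c z / (poly p z * exp (poly q z))"

definition Gdom :: "real \<Rightarrow> complex set" where
  "Gdom R = UNIV - (cball 0 R \<union> {complex_of_real x | x. x \<ge> 0})"

end

theory Submission
  imports Defs
begin


definition DB :: "complex poly \<Rightarrow> real \<Rightarrow> bool" where
  "DB P e \<longleftrightarrow> P = 0 \<or> real (degree P) \<le> e"

lemma DB_deg: "DB P (real (degree P))" by (simp add: DB_def)

lemma DB_mono: "DB P e \<Longrightarrow> e \<le> e' \<Longrightarrow> DB P e'"
  by (auto simp: DB_def)

lemma DB_mult: "DB P e \<Longrightarrow> DB Q f \<Longrightarrow> DB (P * Q) (e + f)"
  by (cases "P = 0 \<or> Q = 0") (auto simp: DB_def degree_mult_eq)

lemma DB_add: "DB P e \<Longrightarrow> DB Q e \<Longrightarrow> DB (P + Q) e"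
proof -
  assume a: "DB P e" "DB Q e"
  show ?thesis
  proof (cases "P = 0 \<or> Q = 0")
    case True then show ?thesis using a by auto
  next
    case False
    then have "real (degree P) \<le> e" "real (degree Q) \<le> e" using a by (auto simp: DB_def)
    moreover have "degree (P + Q) \<le> max (degree P) (degree Q)" by (rule degree_add_le_max)
    ultimately show ?thesis unfolding DB_def
      by (metis (mono_tags, opaque_lifting) max_def of_nat_le_iff order_trans)
  qed
qed

lemma DB_smult: "DB P e \<Longrightarrow> DB (smult c P) e"
  by (auto simp: DB_def)

lemma DB_uminus: "DB P e \<Longrightarrow> DB (- P) e"
  by (auto simp: DB_def)

lemma DB_diff: "DB P e \<Longrightarrow> DB Q e \<Longrightarrow> DB (P - Q) e"
  using DB_add[of P e "- Q"] DB_uminus[of Q e] by simp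

lemma DB_pderiv: "DB P e \<Longrightarrow> DB (pderiv P) (e - 1)"
proof -
  assume a: "DB P e"
  show ?thesis
  proof (cases "degree P = 0")
    case True then show ?thesis by (simp add: DB_def pderiv_eq_0_iff)
  next
    case False
    then have "P \<noteq> 0" by auto
    then show ?thesis using a False by (auto simp: DB_def degree_pderiv of_nat_diff)
  qed
qed

lemma DB_degle: "DB P e \<Longrightarrow> e \<le> real i \<Longrightarrow> degree P \<le> i"
  by (auto simp: DB_def)

lemma DB_drop: "DB P (real n) \<Longrightarrow> coeff P n = 0 \<Longrightarrow> DB P (real n - 1)"
proof -
  assume a: "DB P (real n)" "coeff P n = 0"
  show ?thesis
  proof (cases "P = 0")
    case True then show ?thesis by (simp add: DB_def)
  next
    case False
    then have "degree P \<le> n" using a by (auto simp: DB_def)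
    moreover have "degree P \<noteq> n" using a False by auto
    ultimately have "degree P + 1 \<le> n" by auto
    then show ?thesis unfolding DB_def by (metis of_nat_add of_nat_1 of_nat_le_iff le_diff_eq)
  qed
qed

lemma coeff_mult_top:
  fixes P Q :: "'a::comm_semiring_1 poly"
  assumes "degree P \<le> i" "degree Q \<le> j"
  shows "coeff (P * Q) (i + j) = coeff P i * coeff Q j"
proof -
  have "coeff (P * Q) (i + j) = (\<Sum>k\<le>i+j. coeff P k * coeff Q (i + j - k))"
    by (rule coeff_mult)
  also have "\<dots> = (\<Sum>k\<le>i+j. if k = i then coeff P i * coeff Q j else 0)"
  proof (rule sum.cong[OF refl])
    fix k assume "k \<in> {..i+j}"
    show "coeff P k * coeff Q (i + j - k) = (if k = i then coeff P i * coeff Q j else 0)"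
    proof (cases "k < i")
      case True
      then have "degree Q < i + j - k" using assms by auto
      then show ?thesis using True by (simp add: coeff_eq_0)
    next
      case False
      show ?thesis
      proof (cases "k = i")
        case True then show ?thesis by simp
      next
        case False
        then have "degree P < k" using \<open>\<not> k < i\<close> assms by auto
        then show ?thesis using False by (simp add: coeff_eq_0)
      qed
    qed
  qed
  also have "\<dots> = coeff P i * coeff Q j" by simp
  finally show ?thesis .
qed

lemma poly_norm_le:
  fixes P :: "complex poly"
  shows "norm (poly P t) \<le> (\<Sum>i\<le>degree P. norm (coeff P i)) * max 1 (norm t) ^ degree P"
proof -
  have "norm (poly P t) \<le> (\<Sum>i\<le>degree P. norm (coeff P i * t ^ i))"
    unfolding poly_altdef by (rule norm_sum)
  also have "\<dots> \<le> (\<Sum>i\<le>degree P. norm (coeff P i) * max 1 (norm t) ^ degree P)"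
  proof (rule sum_mono)
    fix i assume i: "i \<in> {..degree P}"
    have "norm t ^ i \<le> max 1 (norm t) ^ i" by (simp add: power_mono)
    also have "\<dots> \<le> max 1 (norm t) ^ degree P" using i by (intro power_increasing) auto
    finally show "norm (coeff P i * t ^ i) \<le> norm (coeff P i) * max 1 (norm t) ^ degree P"
      by (simp add: norm_mult norm_power mult_left_mono)
  qed
  also have "\<dots> = (\<Sum>i\<le>degree P. norm (coeff P i)) * max 1 (norm t) ^ degree P"
    by (simp add: sum_distrib_right)
  finally show ?thesis .
qed

lemma DB_bound:
  assumes "DB P e"
  shows "\<exists>C\<ge>0. \<forall>t. 1 \<le> norm t \<longrightarrow> norm (poly P t) \<le> C * norm t powr e"
proof -
  define C where "C = (\<Sum>i\<le>degree P. norm (coeff P i))"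
  have C0: "C \<ge> 0" unfolding C_def by (simp add: sum_nonneg)
  show ?thesis
  proof (intro exI[of _ C] conjI allI impI C0)
    fix t :: complex assume t: "1 \<le> norm t"
    show "norm (poly P t) \<le> C * norm t powr e"
    proof (cases "P = 0")
      case True then show ?thesis using C0 by simp
    next
      case False
      then have de: "real (degree P) \<le> e" using assms by (simp add: DB_def)
      have "norm (poly P t) \<le> C * max 1 (norm t) ^ degree P" unfolding C_def by (rule poly_norm_le)
      also have "max 1 (norm t) ^ degree P = norm t powr real (degree P)"
      proof -
        have "max 1 (norm t) = norm t" using t by simp
        moreover have "norm t > 0" using t by linarith
        ultimately show ?thesis by (simp add: powr_realpow)
      qed
      also have "norm t powr real (degree P) \<le> norm t powr e"
        using t de by (intro powr_mono) auto
      finally show ?thesis using C0 by (simp add: mult_left_mono)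
    qed
  qed
qed

lemma poly_lower:
  fixes P :: "complex poly"
  assumes "P \<noteq> 0"
  shows "\<exists>c>0. \<exists>T\<ge>1. \<forall>t. T \<le> norm t \<longrightarrow> c * norm t powr real (degree P) \<le> norm (poly P t)"
proof (cases "degree P")
  case 0
  then have "poly P t = coeff P 0" for t by (simp add: poly_altdef)
  moreover have "coeff P 0 \<noteq> 0" using assms 0 by (metis leading_coeff_0_iff)
  ultimately show ?thesis using 0 by (intro exI[of _ "norm (coeff P 0)"] conjI exI[of _ 1]) auto
next
  case (Suc n)
  define S where "S = (\<Sum>i<Suc n. norm (coeff P i))"
  define l where "l = norm (coeff P (Suc n))"
  have l0: "l > 0" using assms Suc unfolding l_def by (metis leading_coeff_0_iff zero_less_norm_iff)
  have S0: "S \<ge> 0" unfolding S_def by (simp add: sum_nonneg)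
  have main: "l / 2 * norm t powr real (degree P) \<le> norm (poly P t)" if t: "max 1 (2*S/l) \<le> norm t" for t
  proof -
    from t have t1: "1 \<le> norm t" and t2: "2 * S / l \<le> norm t" by auto
    have eq: "poly P t = (\<Sum>i<Suc n. coeff P i * t ^ i) + coeff P (Suc n) * t ^ Suc n"
      unfolding poly_altdef Suc by (simp add: lessThan_Suc_atMost[symmetric])
    have "norm (\<Sum>i<Suc n. coeff P i * t ^ i) \<le> (\<Sum>i<Suc n. norm (coeff P i * t ^ i))"
      by (rule norm_sum)
    also have "\<dots> \<le> (\<Sum>i<Suc n. norm (coeff P i) * norm t ^ n)"
    proof (rule sum_mono)
      fix i assume "i \<in> {..<Suc n}"
      then have "norm t ^ i \<le> norm t ^ n" using t1 by (intro power_increasing) auto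
      then show "norm (coeff P i * t ^ i) \<le> norm (coeff P i) * norm t ^ n"
        by (simp add: norm_mult norm_power mult_left_mono)
    qed
    also have "\<dots> = S * norm t ^ n" by (simp only: S_def sum_distrib_right)
    finally have low: "norm (\<Sum>i<Suc n. coeff P i * t ^ i) \<le> S * norm t ^ n" .
    have "S \<le> l / 2 * norm t" using t2 l0 by (simp add: field_simps)
    then have "S * norm t ^ n \<le> l / 2 * norm t * norm t ^ n" by (intro mult_right_mono) auto
    then have key: "S * norm t ^ n \<le> l / 2 * norm t ^ Suc n" by (simp add: mult.assoc)
    have "l * norm t ^ Suc n = norm (coeff P (Suc n) * t ^ Suc n)" by (simp add: l_def norm_mult norm_power)
    also have "\<dots> \<le> norm (poly P t) + norm (\<Sum>i<Suc n. coeff P i * t ^ i)"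
      using eq norm_triangle_ineq4[of "poly P t" "\<Sum>i<Suc n. coeff P i * t ^ i"]
      by (metis add_diff_cancel_left' add.commute)
    finally have "l * norm t ^ Suc n \<le> norm (poly P t) + S * norm t ^ n" using low by linarith
    then have "l / 2 * norm t ^ Suc n \<le> norm (poly P t)" using key by linarith
    moreover have "norm t powr real (degree P) = norm t ^ Suc n"
    proof -
      have "norm t > 0" using t1 by linarith
      then show ?thesis unfolding Suc by (rule powr_realpow)
    qed
    ultimately show "l / 2 * norm t powr real (degree P) \<le> norm (poly P t)" by simp
  qed
  show ?thesis using main l0 by (intro exI[of _ "l/2"] conjI exI[of _ "max 1 (2*S/l)"]) auto
qed



lemma powr_compare:
  fixes s w k a :: real
  assumes w: "0 < w" and lo: "w / k \<le> s" and hi: "s \<le> w * k" and k: "1 \<le> k"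
  shows "s powr a \<le> k powr \<bar>a\<bar> * w powr a"
    and "k powr (- \<bar>a\<bar>) * w powr a \<le> s powr a"
proof -
  have k0: "k > 0" using k by simp
  have wk: "0 < w / k" using w k0 by simp
  have s0: "s > 0" using wk lo by linarith
  have e1: "(w * k) powr a = k powr a * w powr a" using w k0 by (simp add: powr_mult)
  have e2: "(w / k) powr a = k powr (- a) * w powr a"
    by (simp only: powr_divide powr_minus) (simp add: divide_inverse mult.commute)
  show "s powr a \<le> k powr \<bar>a\<bar> * w powr a"
  proof (cases "a \<ge> 0")
    case True
    then have "s powr a \<le> (w * k) powr a" using s0 hi by (intro powr_mono2) auto
    then show ?thesis using e1 True by simp
  next
    case False
    then have "s powr a \<le> (w / k) powr a" using wk lo by (intro powr_mono2') auto
    then show ?thesis using e2 False by simp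
  qed
  show "k powr (- \<bar>a\<bar>) * w powr a \<le> s powr a"
  proof (cases "a \<ge> 0")
    case True
    then have "(w / k) powr a \<le> s powr a" using wk lo by (intro powr_mono2) auto
    then show ?thesis using e2 True by simp
  next
    case False
    then have "(w * k) powr a \<le> s powr a" using s0 hi by (intro powr_mono2') auto
    then show ?thesis using e1 False by simp
  qed
qed

lemma exp_dominates:
  fixes \<beta> :: real
  assumes "0 \<le> \<beta>"
  shows "\<exists>C>0. \<forall>y\<ge>0. (1 + y) powr \<beta> \<le> C * exp (y / 2)"
proof (cases "\<beta> = 0")
  case True
  then show ?thesis by (intro exI[of _ 1]) auto
next
  case False
  then have b0: "\<beta> > 0" using assms by simp
  define \<epsilon> where "\<epsilon> = 1 / (2 * \<beta>)"
  have e0: "\<epsilon> > 0" using b0 by (simp add: \<epsilon>_def)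
  define C where "C = exp (1/2 - \<beta> - \<beta> * ln \<epsilon>)"
  show ?thesis
  proof (intro exI[of _ C] conjI allI impI)
    show "C > 0" by (simp add: C_def)
    fix y :: real assume y: "0 \<le> y"
    have "ln (\<epsilon> * (1 + y)) \<le> \<epsilon> * (1 + y) - 1" using e0 y by (intro ln_le_minus_one) auto
    then have "ln \<epsilon> + ln (1 + y) \<le> \<epsilon> * (1 + y) - 1" using e0 y by (simp add: ln_mult)
    then have "\<beta> * (ln \<epsilon> + ln (1 + y)) \<le> \<beta> * (\<epsilon> * (1 + y) - 1)" using b0 by (intro mult_left_mono) auto
    also have "\<beta> * (\<epsilon> * (1 + y) - 1) = (1 + y) / 2 - \<beta>" using b0 by (simp add: \<epsilon>_def field_simps)
    finally have "\<beta> * ln (1 + y) \<le> y / 2 + (1/2 - \<beta> - \<beta> * ln \<epsilon>)" by (simp add: algebra_simps)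
    then have "exp (\<beta> * ln (1 + y)) \<le> exp (y / 2 + (1/2 - \<beta> - \<beta> * ln \<epsilon>))" by simp
    then show "(1 + y) powr \<beta> \<le> C * exp (y / 2)" using y
      by (simp add: powr_def C_def exp_add mult.commute)
  qed
qed

lemma Gdom_open: "open (Gdom R)"
proof -
  have "{complex_of_real x | x. x \<ge> 0} = \<real> \<inter> {w. 0 \<le> Re w}"
    by (auto simp: complex_is_Real_iff intro!: exI[of _ "Re _"] complex_eqI)
  then have "closed {complex_of_real x | x. x \<ge> 0}" by (simp add: closed_Real_halfspace_Re_ge)
  then show ?thesis unfolding Gdom_def by (intro open_Diff closed_Un) auto
qed

lemma Gdom_iff: "z \<in> Gdom R \<longleftrightarrow> norm z > R \<and> (Im z = 0 \<longrightarrow> Re z < 0)"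
proof -
  have "z \<in> {complex_of_real x | x. x \<ge> 0} \<longleftrightarrow> Im z = 0 \<and> Re z \<ge> 0"
    by (auto intro!: exI[of _ "Re z"] complex_eqI)
  then show ?thesis unfolding Gdom_def by (auto simp: dist_norm)
qed

lemma gfun_deriv:
  "(gfun p q c has_field_derivative poly p z * exp (poly q z)) (at z)"
proof -
  define f where "f = (\<lambda>t. poly p t * exp (poly q t))"
  have hol: "f holomorphic_on UNIV" unfolding f_def by (intro holomorphic_intros)
  have contf: "continuous_on UNIV f" using hol holomorphic_on_imp_continuous_on by blast
  have zer: "contour_integral (linepath 0 b) f + contour_integral (linepath b c') f +
                       contour_integral (linepath c' 0) f = 0" for b c'
  proof -
    have "(f has_contour_integral 0) (linepath 0 b +++ linepath b c' +++ linepath c' 0)"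
      by (rule Cauchy_theorem_triangle) (use hol in \<open>auto intro: holomorphic_on_subset\<close>)
    then show ?thesis by (rule has_chain_integral_chain_integral3)
  qed
  have "((\<lambda>x. contour_integral (linepath 0 x) f) has_field_derivative f z) (at z)"
    by (rule triangle_contour_integrals_starlike_primitive[OF contf]) (use zer in auto)
  then have "((\<lambda>x. contour_integral (linepath 0 x) f + c) has_field_derivative f z) (at z)"
    by (auto intro!: derivative_eq_intros)
  then show ?thesis unfolding gfun_def f_def by simp
qed



lemma ray_lemma:
  fixes K \<kappa> :: "complex \<Rightarrow> complex" and U :: "complex set" and Ck \<alpha> :: real
  assumes deriv: "\<And>s. s \<in> U \<Longrightarrow> (K has_field_derivative \<kappa> s) (at s)"
    and bnd: "\<And>s. s \<in> U \<Longrightarrow> norm (\<kappa> s) \<le> Ck * norm s powr \<alpha> * exp (Re s)"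
    and U1: "\<And>s. s \<in> U \<Longrightarrow> 1 \<le> norm s" and Ck: "0 \<le> Ck"
  shows "\<exists>Mr\<ge>0. \<forall>a b. (\<forall>x\<le>a. Complex x b \<in> U) \<longrightarrow>
            (\<forall>x\<le>a. norm (K (Complex a b) - K (Complex x b)) \<le> Mr * norm (Complex a b) powr \<alpha> * exp a)"
proof -
  obtain C\<beta> where C\<beta>: "C\<beta> > 0" "\<And>y. y \<ge> 0 \<Longrightarrow> (1 + y) powr \<bar>\<alpha>\<bar> \<le> C\<beta> * exp (y / 2)"
    using exp_dominates[of "\<bar>\<alpha>\<bar>"] by auto
  define Mr where "Mr = 2 * Ck * 2 powr \<bar>\<alpha>\<bar> * C\<beta>"
  have Mr0: "Mr \<ge> 0" using Ck C\<beta> by (simp add: Mr_def)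
  have main: "norm (K (Complex a b) - K (Complex x b)) \<le> Mr * norm (Complex a b) powr \<alpha> * exp a"
    if H: "\<forall>x\<le>a. Complex x b \<in> U" and xa: "x \<le> a" for a b x
  proof (cases "x = a")
    case True then show ?thesis using Mr0 by simp
  next
    case False
    then have xa': "x < a" using xa by simp
    define w where "w = Complex a b"
    define W where "W = norm w"
    have W1: "1 \<le> W" unfolding W_def w_def using H U1 by auto
    define M where "M = Ck * 2 powr \<bar>\<alpha>\<bar> * C\<beta> * W powr \<alpha> * exp (a / 2)"
    define f where "f = (\<lambda>y::real. K (complex_of_real y + Complex 0 b))"
    have eqC: "complex_of_real y + Complex 0 b = Complex y b" for y by (simp add: complex_eq_iff)
    have fC: "f y = K (Complex y b)" for y by (simp add: f_def eqC)
    have fd: "(f has_vector_derivative \<kappa> (Complex y b)) (at y)" if "y \<le> a" for y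
    proof -
      have "Complex y b \<in> U" using H that by auto
      then have "(K has_field_derivative \<kappa> (Complex y b)) (at (complex_of_real y + Complex 0 b))"
        using deriv by (simp add: eqC)
      then have "((\<lambda>z. K (z + Complex 0 b)) has_field_derivative \<kappa> (Complex y b)) (at (complex_of_real y))"
        by (simp add: DERIV_shift)
      from has_vector_derivative_real_field[OF this, where s=UNIV] show ?thesis unfolding f_def by simp
    qed
    define \<phi> where "\<phi> = (\<lambda>y::real. 2 * M * exp (y / 2))"
    have \<phi>d: "(\<phi> has_vector_derivative M * exp (y / 2)) (at y)" for y
    proof -
      have "(\<phi> has_real_derivative M * exp (y / 2)) (at y)"
        unfolding \<phi>_def by (auto intro!: derivative_eq_intros)
      then show ?thesis by (simp add: has_real_derivative_iff_has_vector_derivative)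
    qed
    have kb: "norm (\<kappa> (Complex y b)) \<le> M * exp (y / 2)" if y: "y \<le> a" for y
    proof -
      define s where "s = Complex y b"
      define Y where "Y = a - y"
      have Y0: "Y \<ge> 0" using y by (simp add: Y_def)
      have sU: "s \<in> U" using H y by (simp add: s_def)
      have s1: "1 \<le> norm s" using U1 sU by simp
      have "s - w = complex_of_real (y - a)" by (simp add: s_def w_def complex_eq_iff)
      then have dist: "norm (s - w) = Y" using y by (simp only: norm_of_real) (simp add: Y_def)
      have up: "norm s \<le> W * (2 * (1 + Y))"
      proof -
        have "norm s \<le> W + Y" using norm_triangle_ineq2[of s w] dist W_def by simp
        also have "\<dots> \<le> W * (2 * (1 + Y))"
        proof -
          have "Y * 1 \<le> Y * W" using W1 Y0 by (intro mult_left_mono) auto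
          moreover have "W * (2 * (1 + Y)) = 2 * W + 2 * (W * Y)" by (simp add: algebra_simps)
          moreover have "0 \<le> W * Y" using W1 Y0 by simp
          ultimately show ?thesis using W1 by (simp add: mult.commute)
        qed
        finally show ?thesis .
      qed
      have lo: "W / (2 * (1 + Y)) \<le> norm s"
      proof (cases "Y \<le> W / 2")
        case True
        have "W - Y \<le> norm s" using norm_triangle_ineq2[of w s] dist W_def by (simp add: norm_minus_commute)
        moreover have "W / (2 * (1 + Y)) \<le> W / 2" using W1 Y0 by (intro divide_left_mono) auto
        ultimately show ?thesis using True by linarith
      next
        case False
        then have "W / (2 * (1 + Y)) \<le> 1" using Y0 W1 by (simp add: field_simps)
        then show ?thesis using s1 by linarith
      qed
      have m1: "2 powr \<bar>\<alpha>\<bar> * (1 + Y) powr \<bar>\<alpha>\<bar> \<le> 2 powr \<bar>\<alpha>\<bar> * (C\<beta> * exp (Y / 2))"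
        using C\<beta>(2)[OF Y0] by (intro mult_left_mono) auto
      have "norm s powr \<alpha> \<le> (2 * (1 + Y)) powr \<bar>\<alpha>\<bar> * W powr \<alpha>"
        using powr_compare(1)[OF _ lo up] W1 Y0 by auto
      also have "(2 * (1 + Y)) powr \<bar>\<alpha>\<bar> = 2 powr \<bar>\<alpha>\<bar> * (1 + Y) powr \<bar>\<alpha>\<bar>"
        by (rule powr_mult)
      also have "2 powr \<bar>\<alpha>\<bar> * (1 + Y) powr \<bar>\<alpha>\<bar> * W powr \<alpha> \<le> 2 powr \<bar>\<alpha>\<bar> * (C\<beta> * exp (Y / 2)) * W powr \<alpha>"
        using m1 by (intro mult_right_mono) auto
      finally have sp: "norm s powr \<alpha> \<le> 2 powr \<bar>\<alpha>\<bar> * (C\<beta> * exp (Y / 2)) * W powr \<alpha>" .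
      have "norm (\<kappa> s) \<le> Ck * norm s powr \<alpha> * exp y" using bnd[OF sU] by (simp add: s_def)
      also have "\<dots> \<le> Ck * (2 powr \<bar>\<alpha>\<bar> * (C\<beta> * exp (Y / 2)) * W powr \<alpha>) * exp y"
        using sp Ck by (intro mult_right_mono mult_left_mono) auto
      also have "\<dots> = M * exp (y / 2)"
      proof -
        have "exp (Y / 2) * exp y = exp (a / 2) * exp (y / 2)"
          by (simp add: Y_def flip: exp_add) (simp add: field_simps)
        then show ?thesis by (simp add: M_def)
      qed
      finally show ?thesis by (simp add: s_def)
    qed
    have "norm (f a - f x) \<le> \<phi> a - \<phi> x"
    proof (rule differentiable_bound_general[OF xa'])
      show "continuous_on {x..a} f"
        using fd by (intro continuous_at_imp_continuous_on ballI has_vector_derivative_continuous) auto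
      show "continuous_on {x..a} \<phi>"
        using \<phi>d by (intro continuous_at_imp_continuous_on ballI has_vector_derivative_continuous) auto
      show "\<And>y. x < y \<Longrightarrow> y < a \<Longrightarrow> (f has_vector_derivative \<kappa> (Complex y b)) (at y)"
        using fd by auto
      show "\<And>y. x < y \<Longrightarrow> y < a \<Longrightarrow> (\<phi> has_vector_derivative M * exp (y / 2)) (at y)"
        using \<phi>d by auto
      show "\<And>y. x < y \<Longrightarrow> y < a \<Longrightarrow> norm (\<kappa> (Complex y b)) \<le> M * exp (y / 2)"
        using kb by auto
    qed
    also have "\<phi> a - \<phi> x \<le> 2 * M * exp (a / 2)"
    proof -
      have "M \<ge> 0" using Ck C\<beta> by (simp add: M_def)
      then show ?thesis by (simp add: \<phi>_def)
    qed
    also have "2 * M * exp (a / 2) = Mr * W powr \<alpha> * exp a"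
    proof -
      have "exp (a / 2) * exp (a / 2) = exp a" by (simp flip: exp_add)
      then show ?thesis by (simp add: M_def Mr_def)
    qed
    finally show ?thesis by (simp add: fC W_def w_def)
  qed
  show ?thesis using Mr0 main by blast
qed



lemma conv_lemma:
  fixes x X k D e :: real
  assumes x: "0 < x" and D: "0 < D" and k: "1 \<le> k" and X: "0 < X"
    and lo: "X / k \<le> x powr D" and hi: "x powr D \<le> X * k"
  shows "x powr e \<le> k powr \<bar>e / D\<bar> * X powr (e / D)"
    and "k powr (- \<bar>e / D\<bar>) * X powr (e / D) \<le> x powr e"
proof -
  have eq: "x powr e = (x powr D) powr (e / D)" using D by (simp add: powr_powr)
  show "x powr e \<le> k powr \<bar>e / D\<bar> * X powr (e / D)"
    unfolding eq by (rule powr_compare(1)[OF X lo hi k])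
  show "k powr (- \<bar>e / D\<bar>) * X powr (e / D) \<le> x powr e"
    unfolding eq by (rule powr_compare(2)[OF X lo hi k])
qed

lemma poly_facts:
  fixes p q :: "complex poly" and m d :: nat
  assumes degp: "degree p = m" and degq: "degree q = d" and d1: "d \<ge> 1" and monq: "lead_coeff q = 1"
  defines "Q1 \<equiv> pderiv q" and "Q2 \<equiv> pderiv (pderiv q)"
  defines "A1 \<equiv> pderiv p * Q1 - p * Q2"
  defines "A2 \<equiv> pderiv A1 * Q1 - smult 3 (A1 * Q2)"
  defines "N \<equiv> smult (of_nat d) (A1 * q) + smult (of_real (real d - 1 - real m)) (p * Q1 * Q1)"
  shows "DB p (real m)" "DB q (real d)" "DB Q1 (real d - 1)" "DB A1 (real m + real d - 2)"
    "DB A2 (real m + 2 * real d - 4)" "DB N (real m + 2 * real d - 3)"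
    "Q1 \<noteq> 0" "degree Q1 = d - 1"
proof -
  show Dp: "DB p (real m)" using degp DB_deg by metis
  show Dq: "DB q (real d)" using degq DB_deg by metis
  show DQ1: "DB Q1 (real d - 1)" unfolding Q1_def using DB_pderiv[OF Dq] .
  have DQ2: "DB Q2 (real d - 2)" unfolding Q2_def using DB_pderiv[OF DQ1[unfolded Q1_def]] by simp
  have Dp1: "DB (pderiv p) (real m - 1)" using DB_pderiv[OF Dp] .
  have "DB (pderiv p * Q1) ((real m - 1) + (real d - 1))" by (rule DB_mult[OF Dp1 DQ1])
  moreover have "DB (p * Q2) (real m + (real d - 2))" by (rule DB_mult[OF Dp DQ2])
  ultimately show DA1: "DB A1 (real m + real d - 2)" unfolding A1_def
    by (intro DB_diff) (auto elim: DB_mono)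
  have "DB (pderiv A1 * Q1) ((real m + real d - 2 - 1) + (real d - 1))"
    by (rule DB_mult[OF DB_pderiv[OF DA1] DQ1])
  moreover have "DB (A1 * Q2) ((real m + real d - 2) + (real d - 2))" by (rule DB_mult[OF DA1 DQ2])
  ultimately show "DB A2 (real m + 2 * real d - 4)" unfolding A2_def
    by (intro DB_diff DB_smult) (auto elim: DB_mono)
  have lq: "coeff q d = 1" using monq degq by simp
  show degQ1: "degree Q1 = d - 1" unfolding Q1_def by (simp add: degree_pderiv degq)
  have cQ1: "coeff Q1 (d - 1) = of_nat d" unfolding Q1_def coeff_pderiv using d1 lq by simp
  show Q1nz: "Q1 \<noteq> 0" using cQ1 d1 by auto
  have DAq: "DB (A1 * q) (real m + 2 * real d - 2)"
    using DB_mult[OF DA1 Dq] by (auto elim: DB_mono)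
  have DpQQ: "DB (p * Q1 * Q1) (real m + 2 * real d - 2)"
    using DB_mult[OF DB_mult[OF Dp DQ1] DQ1] by (auto elim: DB_mono)
  have DN2: "DB N (real m + 2 * real d - 2)" unfolding N_def
    by (intro DB_add DB_smult DAq DpQQ)
  show "DB N (real m + 2 * real d - 3)"
  proof (cases "m = 0 \<and> d = 1")
    case True
    then have "degree q = 1" using degq by simp
    then have "degree Q1 = 0" unfolding Q1_def by (simp add: degree_pderiv)
    then have "Q2 = 0" unfolding Q2_def Q1_def by (simp add: pderiv_eq_0_iff)
    moreover have "pderiv p = 0" using True degp by (simp add: pderiv_eq_0_iff)
    ultimately have "A1 = 0" unfolding A1_def by simp
    then have "N = 0" unfolding N_def using True by simp
    then show ?thesis by (simp add: DB_def)
  next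
    case False
    define n where "n = m + 2 * d - 2"
    have rn: "real n = real m + 2 * real d - 2" using d1 by (simp add: n_def of_nat_diff)
    define l where "l = coeff p m"
    have degA1: "degree A1 \<le> m + d - 2" using DA1 by (rule DB_degle) (simp add: of_nat_diff)
    have t1: "coeff (pderiv p * Q1) (m + d - 2) = of_nat m * l * of_nat d"
    proof (cases "m = 0")
      case True
      then have "pderiv p = 0" using degp by (simp add: pderiv_eq_0_iff)
      then show ?thesis using True by simp
    next
      case False
      have "degree (pderiv p) \<le> m - 1" using degp by (simp add: degree_pderiv)
      moreover have "degree Q1 \<le> d - 1" using degQ1 by simp
      ultimately have "coeff (pderiv p * Q1) ((m - 1) + (d - 1)) = coeff (pderiv p) (m - 1) * coeff Q1 (d - 1)"
        by (rule coeff_mult_top)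
      moreover have "(m - 1) + (d - 1) = m + d - 2" using False d1 by simp
      moreover have "coeff (pderiv p) (m - 1) = of_nat m * l" using False by (simp add: coeff_pderiv l_def)
      ultimately show ?thesis using cQ1 by simp
    qed
    have t2: "coeff (p * Q2) (m + d - 2) = l * of_nat (d - 1) * of_nat d"
    proof (cases "d = 1")
      case True
      then have "degree Q1 = 0" using degQ1 by simp
      then have "Q2 = 0" unfolding Q2_def Q1_def by (simp add: pderiv_eq_0_iff)
      then show ?thesis using True by simp
    next
      case False
      have dQ2: "degree Q2 \<le> d - 2" unfolding Q2_def using degQ1 by (simp add: degree_pderiv Q1_def)
      have "coeff (p * Q2) (m + (d - 2)) = coeff p m * coeff Q2 (d - 2)"
        using degp dQ2 by (intro coeff_mult_top) auto
      moreover have "m + (d - 2) = m + d - 2" using False d1 by simp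
      moreover have "coeff Q2 (d - 2) = of_nat (d - 1) * of_nat d"
      proof -
        have "Suc (d - 2) = d - 1" using False d1 by simp
        then have "coeff Q2 (d - 2) = of_nat (d - 1) * coeff Q1 (d - 1)"
          unfolding Q2_def coeff_pderiv Q1_def by simp
        then show ?thesis using cQ1 by simp
      qed
      ultimately show ?thesis by (simp add: l_def)
    qed
    have cA1: "coeff A1 (m + d - 2) = of_nat m * l * of_nat d - l * of_nat (d - 1) * of_nat d"
      unfolding A1_def using t1 t2 by simp
    have cAq: "coeff (A1 * q) n = coeff A1 (m + d - 2)"
    proof -
      have "coeff (A1 * q) ((m + d - 2) + d) = coeff A1 (m + d - 2) * coeff q d"
        using degA1 degq by (intro coeff_mult_top) auto
      moreover have "(m + d - 2) + d = n" using False d1 unfolding n_def by auto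
      ultimately show ?thesis using lq by simp
    qed
    have cpQQ: "coeff (p * Q1 * Q1) n = l * of_nat d * of_nat d"
    proof -
      have "coeff (p * Q1) (m + (d - 1)) = coeff p m * coeff Q1 (d - 1)"
        using degp degQ1 by (intro coeff_mult_top) auto
      moreover have "degree (p * Q1) \<le> m + (d - 1)" using degp degQ1
        by (metis degree_mult_le)
      ultimately have "coeff (p * Q1 * Q1) ((m + (d - 1)) + (d - 1)) = coeff p m * coeff Q1 (d - 1) * coeff Q1 (d - 1)"
        using degQ1 coeff_mult_top[of "p * Q1" "m + (d - 1)" Q1 "d - 1"] by simp
      moreover have "(m + (d - 1)) + (d - 1) = n" using d1 unfolding n_def by auto
      ultimately show ?thesis using cQ1 by (simp add: l_def)
    qed
    have "coeff N n = 0"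
    proof -
      have "coeff N n = of_nat d * coeff (A1 * q) n + of_real (real d - 1 - real m) * coeff (p * Q1 * Q1) n"
        unfolding N_def by simp
      also have "\<dots> = of_nat d * (of_nat m * l * of_nat d - l * of_nat (d - 1) * of_nat d)
                      + (of_nat d - 1 - of_nat m) * (l * of_nat d * of_nat d)"
        using cAq cA1 cpQQ by simp
      also have "\<dots> = 0" using d1 by (simp add: of_nat_diff algebra_simps)
      finally show ?thesis .
    qed
    then have "DB N (real n - 1)" using DN2 rn by (intro DB_drop) auto
    then show ?thesis using rn by simp
  qed
qed



lemma exp_half_at_bot: "((\<lambda>x::real. C * exp (x / 2)) \<longlongrightarrow> 0) at_bot"
  by real_asymp

lemma powr_exp_at_bot: "((\<lambda>x::real. \<bar>x\<bar> powr \<gamma> * exp x) \<longlongrightarrow> 0) at_bot"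
proof -
  obtain C where C: "C > 0" "\<And>y. y \<ge> 0 \<Longrightarrow> (1 + y) powr \<bar>\<gamma>\<bar> \<le> C * exp (y / 2)"
    using exp_dominates[of "\<bar>\<gamma>\<bar>"] by auto
  have ev: "\<forall>\<^sub>F x in at_bot. norm (\<bar>x\<bar> powr \<gamma> * exp x) \<le> C * exp (x / 2)"
    unfolding eventually_at_bot_linorder
  proof (intro exI[of _ "-1"] allI impI)
    fix x :: real assume x: "x \<le> -1"
    have "\<bar>x\<bar> powr \<gamma> \<le> \<bar>x\<bar> powr \<bar>\<gamma>\<bar>" using x by (intro powr_mono) auto
    also have "\<dots> \<le> (1 + \<bar>x\<bar>) powr \<bar>\<gamma>\<bar>" using x by (intro powr_mono2) auto
    also have "\<dots> \<le> C * exp (\<bar>x\<bar> / 2)" using C(2)[of "\<bar>x\<bar>"] by simp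
    finally have "\<bar>x\<bar> powr \<gamma> * exp x \<le> C * exp (\<bar>x\<bar> / 2) * exp x" by (simp add: mult_right_mono)
    also have "C * exp (\<bar>x\<bar> / 2) * exp x = C * exp (x / 2)"
      using x by (simp add: mult.assoc flip: exp_add)
    finally show "norm (\<bar>x\<bar> powr \<gamma> * exp x) \<le> C * exp (x / 2)" by simp
  qed
  show ?thesis by (rule Lim_null_comparison[OF ev exp_half_at_bot])
qed

lemma cauchy_at_bot:
  fixes f :: "real \<Rightarrow> complex" and h :: "real \<Rightarrow> real"
  assumes B: "\<And>a x. a \<le> A \<Longrightarrow> x \<le> a \<Longrightarrow> norm (f a - f x) \<le> h a"
    and h: "(h \<longlongrightarrow> 0) at_bot"
  shows "\<exists>L. (f \<longlongrightarrow> L) at_bot"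
proof -
  define X where "X = (\<lambda>n::nat. f (A - real n))"
  have "Cauchy X"
  proof (rule metric_CauchyI)
    fix e :: real assume e: "e > 0"
    have "\<forall>\<^sub>F a in at_bot. norm (h a) < e" using h e by (simp add: tendsto_iff dist_norm)
    then obtain Bb where Bb: "\<And>a. a \<le> Bb \<Longrightarrow> norm (h a) < e" by (auto simp: eventually_at_bot_linorder)
    obtain M :: nat where M: "real M \<ge> A - Bb" using real_arch_simple by blast
    have "dist (X m) (X n) < e" if mn: "m \<ge> M" "n \<ge> M" for m n
    proof (cases "m \<le> n")
      case True
      have "norm (f (A - real m) - f (A - real n)) \<le> h (A - real m)" using True by (intro B) auto
      also have "\<dots> < e" using Bb[of "A - real m"] M mn by auto
      finally show ?thesis by (simp add: X_def dist_norm)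
    next
      case False
      have "norm (f (A - real n) - f (A - real m)) \<le> h (A - real n)" using False by (intro B) auto
      also have "\<dots> < e" using Bb[of "A - real n"] M mn by auto
      finally show ?thesis by (simp add: X_def dist_norm norm_minus_commute)
    qed
    then show "\<exists>M. \<forall>m\<ge>M. \<forall>n\<ge>M. dist (X m) (X n) < e" by blast
  qed
  then obtain L where L: "X \<longlonglongrightarrow> L" using Cauchy_convergent_iff convergent_def by blast
  have bnd: "norm (f a - L) \<le> h a" if a: "a \<le> A" for a
  proof -
    have "(\<lambda>n. f a - X n) \<longlonglongrightarrow> f a - L" by (intro tendsto_intros L)
    moreover have "\<forall>\<^sub>F n in sequentially. norm (f a - X n) \<le> h a"
    proof -
      obtain M :: nat where M: "real M \<ge> A - a" using real_arch_simple by blast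
      have "norm (f a - X n) \<le> h a" if "n \<ge> M" for n
        unfolding X_def using that M a by (intro B) auto
      then show ?thesis unfolding eventually_sequentially by blast
    qed
    ultimately show ?thesis by (intro Lim_norm_ubound) auto
  qed
  have "((\<lambda>a. f a - L) \<longlongrightarrow> 0) at_bot"
  proof (rule Lim_null_comparison[OF _ h])
    show "\<forall>\<^sub>F x in at_bot. norm (f x - L) \<le> h x"
      unfolding eventually_at_bot_linorder using bnd by blast
  qed
  then show ?thesis using LIM_zero_cancel by blast
qed

lemma alg_identity:
  fixes t Kw c ew w l P Q A :: complex
  assumes "P \<noteq> 0" "Q \<noteq> 0" "ew \<noteq> 0" "w \<noteq> 0"
  shows "t - (Kw + (P / Q - A / Q ^ 3) * ew) / (P * ew) =
         t - (1 / Q) * (1 + l / w + ((Kw - c) * (1 / ew) * Q / P - (A / (P * Q ^ 2) + l / w))) - c * (1 / ew) / P"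
  using assms by (simp add: field_simps power2_eq_square power3_eq_cube)



lemma ratio_le:
  fixes a b :: complex and x Ca cb ea eb :: real
  assumes a: "norm a \<le> Ca * x powr ea" and b: "cb * x powr eb \<le> norm b"
    and cb: "cb > 0" and x: "x > 0" and Ca: "Ca \<ge> 0"
  shows "norm (a / b) \<le> (Ca / cb) * x powr (ea - eb)"
proof -
  have pb: "0 < cb * x powr eb" using cb x by simp
  have "norm (a / b) = norm a / norm b" by (simp add: norm_divide)
  also have "\<dots> \<le> (Ca * x powr ea) / (cb * x powr eb)"
    by (rule frac_le) (use a b pb Ca in auto)
  also have "\<dots> = (Ca / cb) * x powr (ea - eb)" using x cb by (simp add: powr_diff field_simps)
  finally show ?thesis .
qed

lemma ratio_ge:
  fixes a b :: complex and x ca Cb ea eb :: real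
  assumes a: "ca * x powr ea \<le> norm a" and b: "norm b \<le> Cb * x powr eb"
    and ca: "ca > 0" and Cb: "Cb > 0" and x: "x > 0" and bnz: "b \<noteq> 0"
  shows "(ca / Cb) * x powr (ea - eb) \<le> norm (a / b)"
proof -
  have "(ca / Cb) * x powr (ea - eb) = (ca * x powr ea) / (Cb * x powr eb)" using x Cb by (simp add: powr_diff field_simps)
  also have "\<dots> \<le> norm a / norm b"
    by (rule frac_le) (use a b ca x bnz in auto)
  also have "\<dots> = norm (a / b)" by (simp add: norm_divide)
  finally show ?thesis .
qed

lemma vseg:
  assumes "z \<in> closed_segment (Complex a b1) (Complex a b2)"
  shows "Re z = a \<and> min b1 b2 \<le> Im z \<and> Im z \<le> max b1 b2"
proof -
  obtain u :: real where u: "0 \<le> u" "u \<le> 1" "z = (1 - u) *\<^sub>R Complex a b1 + u *\<^sub>R Complex a b2"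
    using assms unfolding closed_segment_def by auto
  have Re: "Re z = a" unfolding u(3) by (simp add: algebra_simps)
  have Im: "Im z = (1 - u) * b1 + u * b2" unfolding u(3) by simp
  have "min b1 b2 \<le> (1 - u) * b1 + u * b2"
  proof -
    have "(1 - u) * min b1 b2 \<le> (1 - u) * b1" using u by (intro mult_left_mono) auto
    moreover have "u * min b1 b2 \<le> u * b2" using u by (intro mult_left_mono) auto
    ultimately show ?thesis by (simp add: algebra_simps)
  qed
  moreover have "(1 - u) * b1 + u * b2 \<le> max b1 b2"
  proof -
    have "(1 - u) * b1 \<le> (1 - u) * max b1 b2" using u by (intro mult_left_mono) auto
    moreover have "u * b2 \<le> u * max b1 b2" using u by (intro mult_left_mono) auto
    ultimately show ?thesis by (simp add: algebra_simps)
  qed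
  ultimately show ?thesis using Re Im by simp
qed

lemma norm_Complex_ge_Re: "\<bar>a\<bar> \<le> norm (Complex a b)"
  using abs_Re_le_cmod[of "Complex a b"] by simp

lemma norm_Complex_ge_Im: "\<bar>b\<bar> \<le> norm (Complex a b)"
  using abs_Im_le_cmod[of "Complex a b"] by simp

lemma norm_Complex_le: "norm (Complex a b) \<le> \<bar>a\<bar> + \<bar>b\<bar>"
  using cmod_le[of "Complex a b"] by simp

lemma norm_Complex_mono: "\<bar>a\<bar> \<le> \<bar>x\<bar> \<Longrightarrow> norm (Complex a b) \<le> norm (Complex x b)"
  unfolding cmod_def by (simp add: abs_le_square_iff)

theorem corollary4p3:
  fixes p q :: "complex poly" and m d :: nat and c :: complex and R :: real
    and S :: "complex set" and \<phi> :: "complex \<Rightarrow> complex"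
  assumes degp: "degree p = m" and leadp: "lead_coeff p = of_nat d"
    and degq: "degree q = d" and d1: "d \<ge> 1" and monq: "lead_coeff q = 1"
    and Rpos: "R > 0"
    and critval: "\<And>z. poly (pderiv q) z = 0 \<Longrightarrow> poly q z \<in> ball 0 R"
    and qbound: "\<And>z. norm z \<ge> (1/2) * R powr (1 / real d) \<Longrightarrow>
                   (1/2) ^ d * norm z ^ d \<le> norm (poly q z) \<and> norm (poly q z) \<le> 2 ^ d * norm z ^ d"
    and S: "S \<in> components (poly q -` Gdom R)"
    and \<phi>_hol: "\<phi> holomorphic_on Gdom R"
    and \<phi>_inv: "\<And>w. w \<in> Gdom R \<Longrightarrow> poly q (\<phi> w) = w"
    and \<phi>_img: "\<phi> ` Gdom R = S"
  defines "cS \<equiv> Lim at_bot (\<lambda>x::real. gfun p q c (\<phi> (complex_of_real x)))"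
    and "lam \<equiv> complex_of_real ((real d - 1 - real m) / real d)"
  shows "\<exists>E :: complex \<Rightarrow> complex.
           E \<in> O[inf at_infinity (principal (Gdom R))](\<lambda>w. complex_of_real (norm w powr (-1 - 1 / real d))) \<and>
           (\<forall>\<^sub>F w in inf at_infinity (principal (Gdom R)).
              newton_f p q c (\<phi> w) =
                \<phi> w - (1 / poly (pderiv q) (\<phi> w)) * (1 + lam / w + E w)
                    - cS * exp (- w) / poly p (\<phi> w))"
proof -
  define G where "G = Gdom R"
  define Q1 where "Q1 = pderiv q"
  define Q2 where "Q2 = pderiv (pderiv q)"
  define A1 where "A1 = pderiv p * Q1 - p * Q2"
  define A2 where "A2 = pderiv A1 * Q1 - smult 3 (A1 * Q2)"
  define N where "N = smult (of_nat d) (A1 * q) + smult (of_real (real d - 1 - real m)) (p * Q1 * Q1)"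
  note PF = poly_facts[OF degp degq d1 monq, folded Q2_def, folded Q1_def, folded A1_def, folded A2_def N_def]
  define r where "r = (\<lambda>t. poly p t / poly Q1 t - poly A1 t / poly Q1 t ^ 3)"
  define kf where "kf = (\<lambda>t. poly A2 t / poly Q1 t ^ 5)"
  define K where "K = (\<lambda>w. gfun p q c (\<phi> w) - r (\<phi> w) * exp w)"
  define \<alpha> where "\<alpha> = (real m + 1 - 3 * real d) / real d"
  have dpos: "0 < real d" using d1 by simp
  have Gopen: "open G" unfolding G_def by (rule Gdom_open)
  have Gnorm: "R < norm w" if "w \<in> G" for w using that unfolding G_def Gdom_iff by simp
  have q\<phi>: "poly q (\<phi> w) = w" if "w \<in> G" for w using that \<phi>_inv unfolding G_def by simp
  have Q1nz: "poly Q1 (\<phi> w) \<noteq> 0" if w: "w \<in> G" for w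
  proof
    assume "poly Q1 (\<phi> w) = 0"
    then have "poly q (\<phi> w) \<in> ball 0 R" using critval unfolding Q1_def by blast
    then show False using q\<phi>[OF w] Gnorm[OF w] by simp
  qed
  have \<phi>d: "(\<phi> has_field_derivative 1 / poly Q1 (\<phi> w)) (at w)" if w: "w \<in> G" for w
  proof -
    have d\<phi>: "(\<phi> has_field_derivative deriv \<phi> w) (at w)"
      using \<phi>_hol Gopen w unfolding G_def by (intro holomorphic_derivI) auto
    have "((poly q \<circ> \<phi>) has_field_derivative poly Q1 (\<phi> w) * deriv \<phi> w) (at w)"
      unfolding Q1_def by (rule DERIV_chain[OF poly_DERIV d\<phi>])
    then have "((\<lambda>x. x) has_field_derivative poly Q1 (\<phi> w) * deriv \<phi> w) (at w)"
      by (rule has_field_derivative_transform_within_open[OF _ Gopen w]) (simp add: q\<phi>)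
    then have "poly Q1 (\<phi> w) * deriv \<phi> w = 1" using DERIV_ident DERIV_unique by blast
    then have "deriv \<phi> w = 1 / poly Q1 (\<phi> w)" using Q1nz[OF w] by (simp add: field_simps)
    then show ?thesis using d\<phi> by simp
  qed
  have rd: "(r has_field_derivative (poly A1 t / poly Q1 t ^ 2 - poly A2 t / poly Q1 t ^ 4)) (at t)"
    if t: "poly Q1 t \<noteq> 0" for t
  proof -
    have e1: "poly (pderiv Q1) t = poly Q2 t" by (simp add: Q1_def Q2_def)
    have e2: "poly A1 t = poly (pderiv p) t * poly Q1 t - poly p t * poly Q2 t" by (simp add: A1_def)
    have e3: "poly A2 t = poly (pderiv A1) t * poly Q1 t - 3 * poly A1 t * poly Q2 t" by (simp add: A2_def)
    have "(r has_field_derivative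
        ((poly (pderiv p) t * poly Q1 t - poly p t * poly (pderiv Q1) t) / (poly Q1 t * poly Q1 t)
         - (poly (pderiv A1) t * poly Q1 t ^ 3 - poly A1 t * (of_nat 3 * poly (pderiv Q1) t * poly Q1 t ^ 2))
             / (poly Q1 t ^ 3 * poly Q1 t ^ 3))) (at t)"
    proof -
      have dQ3: "((\<lambda>x. poly Q1 x ^ 3) has_field_derivative of_nat 3 * poly (pderiv Q1) t * poly Q1 t ^ 2) (at t)"
        using DERIV_power[OF poly_DERIV[of Q1 t], of 3] by (simp add: mult.assoc)
      show ?thesis unfolding r_def using t
        by (intro DERIV_diff DERIV_divide poly_DERIV dQ3) auto
    qed
    moreover have "((poly (pderiv p) t * poly Q1 t - poly p t * poly (pderiv Q1) t) / (poly Q1 t * poly Q1 t)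
         - (poly (pderiv A1) t * poly Q1 t ^ 3 - poly A1 t * (of_nat 3 * poly (pderiv Q1) t * poly Q1 t ^ 2))
             / (poly Q1 t ^ 3 * poly Q1 t ^ 3)) = poly A1 t / poly Q1 t ^ 2 - poly A2 t / poly Q1 t ^ 4"
      unfolding e1 e3 using t by (simp add: e2 field_simps eval_nat_numeral)
    ultimately show ?thesis by simp
  qed
  have Kd: "(K has_field_derivative kf (\<phi> w) * exp w) (at w)" if w: "w \<in> G" for w
  proof -
    define t where "t = \<phi> w"
    have Qt: "poly Q1 t \<noteq> 0" using Q1nz[OF w] by (simp add: t_def)
    have g: "((\<lambda>w. gfun p q c (\<phi> w)) has_field_derivative (poly p t * exp (poly q t)) * (1 / poly Q1 t)) (at w)"
      unfolding t_def by (rule DERIV_chain2[OF gfun_deriv \<phi>d[OF w]])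
    have rr: "((\<lambda>w. r (\<phi> w)) has_field_derivative (poly A1 t / poly Q1 t ^ 2 - poly A2 t / poly Q1 t ^ 4) * (1 / poly Q1 t)) (at w)"
      unfolding t_def by (rule DERIV_chain2[OF rd \<phi>d[OF w]]) (use Qt t_def in simp)
    have "(K has_field_derivative (poly p t * exp (poly q t)) * (1 / poly Q1 t)
           - ((poly A1 t / poly Q1 t ^ 2 - poly A2 t / poly Q1 t ^ 4) * (1 / poly Q1 t) * exp w + exp w * r t)) (at w)"
      unfolding K_def t_def by (intro DERIV_diff DERIV_mult g[unfolded t_def] rr[unfolded t_def] DERIV_exp)
    moreover have "(poly p t * exp (poly q t)) * (1 / poly Q1 t)
           - ((poly A1 t / poly Q1 t ^ 2 - poly A2 t / poly Q1 t ^ 4) * (1 / poly Q1 t) * exp w + exp w * r t)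
           = kf t * exp w"
      using Qt q\<phi>[OF w] unfolding t_def[symmetric] by (simp add: r_def kf_def field_simps eval_nat_numeral)
    ultimately show ?thesis by (simp add: t_def)
  qed
  have pnz: "p \<noteq> 0" using leadp d1 by auto
  have qnz: "q \<noteq> 0" using monq by auto
  obtain cp Tp where cp: "cp > 0" "Tp \<ge> 1" "\<And>t. Tp \<le> norm t \<Longrightarrow> cp * norm t powr real m \<le> norm (poly p t)"
    using poly_lower[OF pnz] degp by auto
  obtain cq Tq where cq: "cq > 0" "Tq \<ge> 1" "\<And>t. Tq \<le> norm t \<Longrightarrow> cq * norm t powr real d \<le> norm (poly q t)"
    using poly_lower[OF qnz] degq by auto
  obtain c1 T1 where c1: "c1 > 0" "T1 \<ge> 1" "\<And>t. T1 \<le> norm t \<Longrightarrow> c1 * norm t powr (real d - 1) \<le> norm (poly Q1 t)"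
    using poly_lower[OF PF(7)] PF(8) d1 by (auto simp: of_nat_diff)
  obtain Cq where Cq: "Cq \<ge> 0" "\<And>t. 1 \<le> norm t \<Longrightarrow> norm (poly q t) \<le> Cq * norm t powr real d"
    using DB_bound[OF PF(2)] by auto
  obtain C1 where C1: "C1 \<ge> 0" "\<And>t. 1 \<le> norm t \<Longrightarrow> norm (poly Q1 t) \<le> C1 * norm t powr (real d - 1)"
    using DB_bound[OF PF(3)] by auto
  obtain CA1 where CA1: "CA1 \<ge> 0" "\<And>t. 1 \<le> norm t \<Longrightarrow> norm (poly A1 t) \<le> CA1 * norm t powr (real m + real d - 2)"
    using DB_bound[OF PF(4)] by auto
  obtain CA2 where CA2: "CA2 \<ge> 0" "\<And>t. 1 \<le> norm t \<Longrightarrow> norm (poly A2 t) \<le> CA2 * norm t powr (real m + 2 * real d - 4)"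
    using DB_bound[OF PF(5)] by auto
  obtain CN where CN: "CN \<ge> 0" "\<And>t. 1 \<le> norm t \<Longrightarrow> norm (poly N t) \<le> CN * norm t powr (real m + 2 * real d - 3)"
    using DB_bound[OF PF(6)] by auto
  obtain Cp where Cp: "Cp \<ge> 0" "\<And>t. 1 \<le> norm t \<Longrightarrow> norm (poly p t) \<le> Cp * norm t powr real m"
    using DB_bound[OF PF(1)] by auto
  define T0 where "T0 = max (max Tp Tq) T1"
  have T0: "T0 \<ge> 1" "Tp \<le> T0" "Tq \<le> T0" "T1 \<le> T0" using cp cq c1 by (auto simp: T0_def)
  define Sq where "Sq = (\<Sum>i\<le>degree q. norm (coeff q i))"
  have Sq0: "Sq \<ge> 0" unfolding Sq_def by (simp add: sum_nonneg)
  define R1 where "R1 = max (R + 1) (Sq * T0 ^ d + 1)"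
  have R1: "1 \<le> R1" "R < R1" "Sq * T0 ^ d < R1" using Rpos by (auto simp: R1_def)
  have tbig: "T0 \<le> norm (\<phi> w)" if w: "w \<in> G" "R1 \<le> norm w" for w
  proof (rule ccontr)
    assume "\<not> T0 \<le> norm (\<phi> w)"
    then have mx: "max 1 (norm (\<phi> w)) \<le> T0" using T0 by auto
    have "norm w = norm (poly q (\<phi> w))" using q\<phi>[OF w(1)] by simp
    also have "\<dots> \<le> Sq * max 1 (norm (\<phi> w)) ^ degree q" unfolding Sq_def by (rule poly_norm_le)
    also have "\<dots> \<le> Sq * T0 ^ d"
    proof -
      have "max 1 (norm (\<phi> w)) ^ degree q \<le> T0 ^ degree q" by (rule power_mono[OF mx]) simp
      then show ?thesis using Sq0 degq by (simp add: mult_left_mono)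
    qed
    finally show False using R1 w(2) by linarith
  qed
  define k where "k = max 1 (max Cq (1 / cq))"
  have k1: "1 \<le> k" by (simp add: k_def)
  have tw: "norm w / k \<le> norm (\<phi> w) powr real d \<and> norm (\<phi> w) powr real d \<le> norm w * k"
    if w: "w \<in> G" "R1 \<le> norm w" for w
  proof -
    define t where "t = \<phi> w"
    have t1: "1 \<le> norm t" "Tq \<le> norm t" using tbig[OF w] T0 by (auto simp: t_def)
    have wq: "norm w = norm (poly q t)" using q\<phi>[OF w(1)] by (simp add: t_def)
    have lo: "cq * norm t powr real d \<le> norm w" using cq(3)[OF t1(2)] wq by simp
    have hi: "norm w \<le> Cq * norm t powr real d" using Cq(2)[OF t1(1)] wq by simp
    have "norm t powr real d \<le> norm w / cq" using lo cq(1) by (simp add: field_simps)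
    also have "\<dots> = norm w * (1 / cq)" by simp
    also have "\<dots> \<le> norm w * k" by (intro mult_left_mono) (auto simp: k_def)
    finally have A: "norm t powr real d \<le> norm w * k" .
    have "norm w \<le> k * norm t powr real d"
      using hi by (rule order_trans) (intro mult_right_mono, auto simp: k_def)
    then have B: "norm w / k \<le> norm t powr real d" using k1 by (simp add: field_simps)
    show ?thesis using A B by (simp add: t_def)
  qed
  have convU: "norm (\<phi> w) powr e \<le> k powr \<bar>e / real d\<bar> * norm w powr (e / real d)"
    and convL: "k powr (- \<bar>e / real d\<bar>) * norm w powr (e / real d) \<le> norm (\<phi> w) powr e"
    if w: "w \<in> G" "R1 \<le> norm w" for w e
  proof -
    have x: "0 < norm (\<phi> w)" using tbig[OF w] T0 by linarith
    have X: "0 < norm w" using w R1 by linarith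
    show "norm (\<phi> w) powr e \<le> k powr \<bar>e / real d\<bar> * norm w powr (e / real d)"
      using conv_lemma(1)[OF x dpos k1 X] tw[OF w] by auto
    show "k powr (- \<bar>e / real d\<bar>) * norm w powr (e / real d) \<le> norm (\<phi> w) powr e"
      using conv_lemma(2)[OF x dpos k1 X] tw[OF w] by auto
  qed
  have Q1pow: "c1 ^ n * norm t powr (real n * (real d - 1)) \<le> norm (poly Q1 t ^ n)" if t: "T1 \<le> norm t" for t n
  proof -
    have t0: "norm t \<noteq> 0" using t c1 by auto
    have "(c1 * norm t powr (real d - 1)) ^ n \<le> norm (poly Q1 t) ^ n"
      using c1(3)[OF t] c1(1) by (intro power_mono) auto
    moreover have "(c1 * norm t powr (real d - 1)) ^ n = c1 ^ n * norm t powr (real n * (real d - 1))"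
      using t0 by (simp add: power_mult_distrib powr_power)
    ultimately show ?thesis by (simp add: norm_power)
  qed
  define Ck where "Ck = CA2 / c1 ^ 5 * k powr \<bar>\<alpha>\<bar>"
  have Ck0: "Ck \<ge> 0" using CA2 c1 by (simp add: Ck_def)
  have KB: "norm (kf (\<phi> w)) \<le> Ck * norm w powr \<alpha>" if w: "w \<in> G" "R1 \<le> norm w" for w
  proof -
    define t where "t = \<phi> w"
    have t1: "1 \<le> norm t" "T1 \<le> norm t" using tbig[OF w] T0 by (auto simp: t_def)
    have A: "norm (kf t) \<le> (CA2 / c1 ^ 5) * norm t powr ((real m + 2 * real d - 4) - real 5 * (real d - 1))"
      unfolding kf_def
      by (rule ratio_le[OF CA2(2)[OF t1(1)] Q1pow[OF t1(2), of 5]]) (use c1 t1 CA2 in auto)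
    have B: "(real m + 2 * real d - 4) - real 5 * (real d - 1) = \<alpha> * real d"
      using dpos by (simp add: \<alpha>_def field_simps)
    have C: "norm t powr (\<alpha> * real d) \<le> k powr \<bar>\<alpha>\<bar> * norm w powr \<alpha>"
      using convU[OF w, of "\<alpha> * real d"] dpos by (simp add: t_def)
    have "(CA2 / c1 ^ 5) * norm t powr (\<alpha> * real d) \<le> (CA2 / c1 ^ 5) * (k powr \<bar>\<alpha>\<bar> * norm w powr \<alpha>)"
      using C CA2 c1 by (intro mult_left_mono) auto
    then show ?thesis using A B by (simp add: Ck_def t_def mult.assoc)
  qed
  define \<beta> where "\<beta> = (real m + 1 - real d) / real d"
  define cu where "cu = cp / (C1 + 1) * k powr (- \<bar>\<beta>\<bar>)"
  have cu0: "cu > 0" using cp C1 k1 by (simp add: cu_def)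
  have UB: "cu * norm w powr \<beta> \<le> norm (poly p (\<phi> w) / poly Q1 (\<phi> w))" if w: "w \<in> G" "R1 \<le> norm w" for w
  proof -
    define t where "t = \<phi> w"
    have t1: "1 \<le> norm t" "Tp \<le> norm t" using tbig[OF w] T0 by (auto simp: t_def)
    have Qb: "norm (poly Q1 t) \<le> (C1 + 1) * norm t powr (real d - 1)"
    proof -
      have "C1 * norm t powr (real d - 1) \<le> (C1 + 1) * norm t powr (real d - 1)" by (intro mult_right_mono) auto
      then show ?thesis using C1(2)[OF t1(1)] by linarith
    qed
    have U1: "(cp / (C1 + 1)) * norm t powr (real m - (real d - 1)) \<le> norm (poly p t / poly Q1 t)"
      by (rule ratio_ge[OF cp(3)[OF t1(2)] Qb]) (use cp C1 t1 Q1nz[OF w(1)] in \<open>auto simp: t_def\<close>)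
    have U2: "k powr (- \<bar>\<beta>\<bar>) * norm w powr \<beta> \<le> norm t powr (real m - (real d - 1))"
      using convL[OF w, of "real m - (real d - 1)"] dpos by (simp add: t_def \<beta>_def field_simps)
    have "cu * norm w powr \<beta> = (cp / (C1 + 1)) * (k powr (- \<bar>\<beta>\<bar>) * norm w powr \<beta>)"
      by (simp add: cu_def)
    also have "\<dots> \<le> (cp / (C1 + 1)) * norm t powr (real m - (real d - 1))"
      using U2 cp C1 by (intro mult_left_mono) auto
    also have "\<dots> \<le> norm (poly p t / poly Q1 t)" by (rule U1)
    finally show ?thesis by (simp add: t_def)
  qed
  have pnz_w: "poly p (\<phi> w) \<noteq> 0" if w: "w \<in> G" "R1 \<le> norm w" for w
  proof
    assume "poly p (\<phi> w) = 0"
    then have "cu * norm w powr \<beta> \<le> 0" using UB[OF w] by simp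
    moreover have "0 < norm w" using w R1 by linarith
    then have "0 < cu * norm w powr \<beta>" using cu0 by simp
    ultimately show False by linarith
  qed
  define Cn where "Cn = CN / (real d * cp * c1 ^ 2 * cq) * k powr \<bar>-1 - 1 / real d\<bar>"
  have NB: "norm (poly A1 (\<phi> w) / (poly p (\<phi> w) * poly Q1 (\<phi> w) ^ 2) + lam / w) \<le> Cn * norm w powr (-1 - 1 / real d)"
    if w: "w \<in> G" "R1 \<le> norm w" for w
  proof -
    define t where "t = \<phi> w"
    have t1: "1 \<le> norm t" "Tp \<le> norm t" "Tq \<le> norm t" "T1 \<le> norm t" using tbig[OF w] T0 by (auto simp: t_def)
    have Pn: "poly p t \<noteq> 0" using pnz_w[OF w] by (simp add: t_def)
    have Qn: "poly Q1 t \<noteq> 0" using Q1nz[OF w(1)] by (simp add: t_def)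
    have wq: "poly q t = w" using q\<phi>[OF w(1)] by (simp add: t_def)
    have wn: "w \<noteq> 0" using w R1 by auto
    have eq: "poly A1 t / (poly p t * poly Q1 t ^ 2) + lam / w
        = poly N t / (of_nat d * poly p t * poly Q1 t ^ 2 * poly q t)"
      using Pn Qn wn d1
      by (simp add: wq N_def lam_def field_simps of_real_divide power2_eq_square)
    have a1: "cp * norm t powr real m \<le> norm (poly p t)" using cp(3)[OF t1(2)] by (simp)
    have a2: "c1 ^ 2 * norm t powr (real 2 * (real d - 1)) \<le> norm (poly Q1 t ^ 2)" using Q1pow[OF t1(4), of 2] by (simp)
    have a3: "cq * norm t powr real d \<le> norm (poly q t)" using cq(3)[OF t1(3)] by (simp)
    have "real d * ((cp * norm t powr real m) * (c1 ^ 2 * norm t powr (real 2 * (real d - 1))) * (cq * norm t powr real d))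
        \<le> real d * (norm (poly p t) * norm (poly Q1 t ^ 2) * norm (poly q t))"
      using a1 a2 a3 cp c1 cq by (intro mult_left_mono mult_mono) auto
    note F1 = this
    have F2: "real d * ((cp * norm t powr real m) * (c1 ^ 2 * norm t powr (real 2 * (real d - 1))) * (cq * norm t powr real d))
        = (real d * cp * c1 ^ 2 * cq) * norm t powr (real m + real 2 * (real d - 1) + real d)"
    proof -
      have pe: "norm t powr (real m + real 2 * (real d - 1) + real d) = norm t powr real m * norm t powr (real 2 * (real d - 1)) * norm t powr real d"
        by (simp only: powr_add)
      show ?thesis unfolding pe by (simp add: algebra_simps)
    qed
    have F3: "real d * (norm (poly p t) * norm (poly Q1 t ^ 2) * norm (poly q t))
        = norm (of_nat d * poly p t * poly Q1 t ^ 2 * poly q t)"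
      by (simp add: norm_mult)
    have den: "(real d * cp * c1 ^ 2 * cq) * norm t powr (real m + real 2 * (real d - 1) + real d)
        \<le> norm (of_nat d * poly p t * poly Q1 t ^ 2 * poly q t)" using F1 unfolding F2 F3 .
    have "norm (poly N t / (of_nat d * poly p t * poly Q1 t ^ 2 * poly q t))
        \<le> (CN / (real d * cp * c1 ^ 2 * cq)) * norm t powr ((real m + 2 * real d - 3) - (real m + real 2 * (real d - 1) + real d))"
      by (rule ratio_le[OF CN(2)[OF t1(1)] den]) (use cp c1 cq dpos t1 CN in auto)
    also have "(real m + 2 * real d - 3) - (real m + real 2 * (real d - 1) + real d) = -1 - real d" by simp
    also have "(CN / (real d * cp * c1 ^ 2 * cq)) * norm t powr (-1 - real d)
        \<le> (CN / (real d * cp * c1 ^ 2 * cq)) * (k powr \<bar>(-1 - real d) / real d\<bar> * norm w powr ((-1 - real d) / real d))"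
      using convU[OF w, of "-1 - real d"] CN cp c1 cq dpos by (intro mult_left_mono) (auto simp: t_def)
    also have "(-1 - real d) / real d = -1 - 1 / real d" using dpos by (simp add: field_simps)
    finally show ?thesis using eq by (simp add: Cn_def t_def mult.assoc)
  qed
  define \<gamma> where "\<gamma> = (real m + real d) / real d"
  define Cr where "Cr = (Cp / c1 + CA1 / c1 ^ 3) * k powr \<bar>\<gamma>\<bar>"
  have RB: "norm (r (\<phi> w)) \<le> Cr * norm w powr \<gamma>" if w: "w \<in> G" "R1 \<le> norm w" for w
  proof -
    define t where "t = \<phi> w"
    have t1: "1 \<le> norm t" "T1 \<le> norm t" using tbig[OF w] T0 by (auto simp: t_def)
    have r1: "norm (poly p t / poly Q1 t) \<le> (Cp / c1) * norm t powr (real m - (real d - 1))"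
      by (rule ratio_le[OF Cp(2)[OF t1(1)] c1(3)[OF t1(2)]])
         (use c1 Cp t1 in auto)
    have r2: "norm (poly A1 t / poly Q1 t ^ 3) \<le> (CA1 / c1 ^ 3) * norm t powr ((real m + real d - 2) - real 3 * (real d - 1))"
      by (rule ratio_le[OF CA1(2)[OF t1(1)] Q1pow[OF t1(2), of 3]])
         (use c1 CA1 t1 in auto)
    have e1: "norm t powr (real m - (real d - 1)) \<le> norm t powr (real m + real d)" using t1 d1 by (intro powr_mono) auto
    have e2: "norm t powr ((real m + real d - 2) - real 3 * (real d - 1)) \<le> norm t powr (real m + real d)" using t1 d1 by (intro powr_mono) auto
    have "norm (r t) \<le> norm (poly p t / poly Q1 t) + norm (poly A1 t / poly Q1 t ^ 3)"
      unfolding r_def by (rule norm_triangle_ineq4)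
    also have "\<dots> \<le> (Cp / c1) * norm t powr (real m + real d) + (CA1 / c1 ^ 3) * norm t powr (real m + real d)"
      using r1 r2 e1 e2 Cp CA1 c1
      by (meson add_mono divide_nonneg_pos less_imp_le mult_left_mono order_trans zero_less_power)
    also have "\<dots> = (Cp / c1 + CA1 / c1 ^ 3) * norm t powr (real m + real d)" by (simp add: algebra_simps)
    also have "\<dots> \<le> (Cp / c1 + CA1 / c1 ^ 3) * (k powr \<bar>\<gamma>\<bar> * norm w powr \<gamma>)"
      using convU[OF w, of "real m + real d"] Cp CA1 c1 by (intro mult_left_mono) (auto simp: t_def \<gamma>_def)
    finally show ?thesis by (simp add: Cr_def t_def mult.assoc)
  qed
  define U where "U = {s \<in> G. R1 \<le> norm s}"
  define \<kappa> where "\<kappa> = (\<lambda>s. kf (\<phi> s) * exp s)"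
  have \<kappa>d: "\<And>s. s \<in> U \<Longrightarrow> (K has_field_derivative \<kappa> s) (at s)" using Kd by (auto simp: U_def \<kappa>_def)
  have \<kappa>b: "norm (\<kappa> s) \<le> Ck * norm s powr \<alpha> * exp (Re s)" if s: "s \<in> U" for s
  proof -
    have "norm (\<kappa> s) = norm (kf (\<phi> s)) * exp (Re s)" by (simp add: \<kappa>_def norm_mult)
    also have "\<dots> \<le> Ck * norm s powr \<alpha> * exp (Re s)" using KB s by (intro mult_right_mono) (auto simp: U_def)
    finally show ?thesis .
  qed
  have U1: "\<And>s. s \<in> U \<Longrightarrow> 1 \<le> norm s" using R1 by (auto simp: U_def)
  obtain Mr where Mr0: "Mr \<ge> 0" and Mr: "\<And>a b. (\<forall>x\<le>a. Complex x b \<in> U) \<Longrightarrow>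
       (\<forall>x\<le>a. norm (K (Complex a b) - K (Complex x b)) \<le> Mr * norm (Complex a b) powr \<alpha> * exp a)"
    using ray_lemma[of U K \<kappa> Ck \<alpha>, OF \<kappa>d \<kappa>b U1 Ck0] by blast
  have UG: "z \<in> U" if "R1 \<le> norm z" "Im z \<noteq> 0 \<or> Re z < 0" for z
    using that R1 unfolding U_def G_def Gdom_iff by auto
  have inU: "Complex x b \<in> U" if x: "x \<le> -R1" for x b
  proof -
    have "R1 \<le> norm (Complex x b)" using norm_Complex_ge_Re[of x b] x R1 by linarith
    moreover have "x < 0" using x R1 by linarith
    ultimately show ?thesis by (intro UG) auto
  qed
  have nC0: "norm (Complex a 0) = \<bar>a\<bar>" for a by (simp add: cmod_def)
  have realK: "\<exists>L. ((\<lambda>x. K (Complex x 0)) \<longlongrightarrow> L) at_bot"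
  proof (rule cauchy_at_bot[where A = "-R1" and h = "\<lambda>a. Mr * (\<bar>a\<bar> powr \<alpha> * exp a)"])
    show "norm (K (Complex a 0) - K (Complex x 0)) \<le> Mr * (\<bar>a\<bar> powr \<alpha> * exp a)" if "a \<le> -R1" "x \<le> a" for a x
      using Mr[of a 0] inU that by (auto simp: nC0 mult.assoc)
    show "((\<lambda>a. Mr * (\<bar>a\<bar> powr \<alpha> * exp a)) \<longlongrightarrow> 0) at_bot"
      using tendsto_mult[OF tendsto_const[of Mr] powr_exp_at_bot[of \<alpha>]] by simp
  qed
  then obtain L where L: "((\<lambda>x. K (Complex x 0)) \<longlongrightarrow> L) at_bot" by blast
  have cplx: "complex_of_real x = Complex x 0" for x by (simp add: complex_eq_iff)
  have rlim: "((\<lambda>x. r (\<phi> (Complex x 0)) * exp (Complex x 0)) \<longlongrightarrow> 0) at_bot"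
  proof (rule Lim_null_comparison)
    show "((\<lambda>x. Cr * (\<bar>x\<bar> powr \<gamma> * exp x)) \<longlongrightarrow> 0) at_bot"
      using tendsto_mult[OF tendsto_const[of Cr] powr_exp_at_bot[of \<gamma>]] by simp
    have "norm (r (\<phi> (Complex x 0)) * exp (Complex x 0)) \<le> Cr * (\<bar>x\<bar> powr \<gamma> * exp x)" if x: "x \<le> -R1" for x
    proof -
      have xU: "Complex x 0 \<in> U" using inU[OF x] .
      have "norm (r (\<phi> (Complex x 0)) * exp (Complex x 0)) = norm (r (\<phi> (Complex x 0))) * exp x"
        by (simp add: norm_mult)
      also have "\<dots> \<le> Cr * norm (Complex x 0) powr \<gamma> * exp x"
        using RB xU by (intro mult_right_mono) (auto simp: U_def)
      finally show ?thesis by (simp add: nC0 mult.assoc)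
    qed
    then show "\<forall>\<^sub>F x in at_bot. norm (r (\<phi> (Complex x 0)) * exp (Complex x 0)) \<le> Cr * (\<bar>x\<bar> powr \<gamma> * exp x)"
      unfolding eventually_at_bot_linorder by blast
  qed
  have gl: "((\<lambda>x. gfun p q c (\<phi> (complex_of_real x))) \<longlongrightarrow> L) at_bot"
  proof -
    have "((\<lambda>x. K (Complex x 0) + r (\<phi> (Complex x 0)) * exp (Complex x 0)) \<longlongrightarrow> L + 0) at_bot"
      by (intro tendsto_add L rlim)
    then show ?thesis by (simp add: K_def cplx)
  qed
  have cSL: "cS = L" unfolding cS_def by (rule tendsto_Lim[OF _ gl]) simp
  have vert: "norm (K (Complex x b) - K (Complex x 0)) \<le> (Ck * (1 + \<bar>b\<bar>) powr \<bar>\<alpha>\<bar> * (\<bar>x\<bar> powr \<alpha> * exp x)) * \<bar>b\<bar>"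
    if x: "x \<le> -R1" for x b
  proof -
    define Sg where "Sg = closed_segment (Complex x 0) (Complex x b)"
    have zU: "z \<in> U" and zb: "norm (\<kappa> z) \<le> Ck * (1 + \<bar>b\<bar>) powr \<bar>\<alpha>\<bar> * (\<bar>x\<bar> powr \<alpha> * exp x)" if z: "z \<in> Sg" for z
    proof -
      have vz: "Re z = x \<and> min 0 b \<le> Im z \<and> Im z \<le> max 0 b" using vseg z unfolding Sg_def by blast
      have zc: "z = Complex x (Im z)" using vz by (simp add: complex_eq_iff)
      show zU: "z \<in> U" using inU[OF x, of "Im z"] zc by simp
      have x1: "1 \<le> \<bar>x\<bar>" using x R1 by linarith
      have lo: "\<bar>x\<bar> / (1 + \<bar>b\<bar>) \<le> norm z"
      proof -
        have "\<bar>x\<bar> / (1 + \<bar>b\<bar>) \<le> \<bar>x\<bar>" by (simp add: divide_le_eq mult_le_cancel_left1)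
        also have "\<dots> \<le> norm z" using abs_Re_le_cmod[of z] vz by simp
        finally show ?thesis .
      qed
      have hi: "norm z \<le> \<bar>x\<bar> * (1 + \<bar>b\<bar>)"
      proof -
        have "norm z \<le> \<bar>Re z\<bar> + \<bar>Im z\<bar>" by (rule cmod_le)
        also have "\<dots> \<le> \<bar>x\<bar> + \<bar>b\<bar>" using vz by (auto simp: abs_le_iff min_def max_def split: if_splits)
        also have "\<dots> \<le> \<bar>x\<bar> * (1 + \<bar>b\<bar>)" using x1 by (simp add: algebra_simps mult_le_cancel_left1)
        finally show ?thesis .
      qed
      have "norm z powr \<alpha> \<le> (1 + \<bar>b\<bar>) powr \<bar>\<alpha>\<bar> * \<bar>x\<bar> powr \<alpha>"
        by (rule powr_compare(1)[OF _ lo hi]) (use x1 in auto)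
      then have "Ck * norm z powr \<alpha> * exp x \<le> Ck * ((1 + \<bar>b\<bar>) powr \<bar>\<alpha>\<bar> * \<bar>x\<bar> powr \<alpha>) * exp x"
        using Ck0 by (intro mult_right_mono mult_left_mono) auto
      moreover have "norm (\<kappa> z) \<le> Ck * norm z powr \<alpha> * exp x" using \<kappa>b[OF zU] vz by simp
      ultimately show "norm (\<kappa> z) \<le> Ck * (1 + \<bar>b\<bar>) powr \<bar>\<alpha>\<bar> * (\<bar>x\<bar> powr \<alpha> * exp x)"
        by (simp add: mult.assoc)
    qed
    have "norm (K (Complex x b) - K (Complex x 0)) \<le> (Ck * (1 + \<bar>b\<bar>) powr \<bar>\<alpha>\<bar> * (\<bar>x\<bar> powr \<alpha> * exp x)) * norm (Complex x b - Complex x 0)"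
    proof (rule field_differentiable_bound[of Sg])
      show "convex Sg" unfolding Sg_def by simp
      show "(K has_field_derivative \<kappa> z) (at z within Sg)" if "z \<in> Sg" for z
        using \<kappa>d[OF zU[OF that]] by (rule has_field_derivative_at_within)
      show "norm (\<kappa> z) \<le> Ck * (1 + \<bar>b\<bar>) powr \<bar>\<alpha>\<bar> * (\<bar>x\<bar> powr \<alpha> * exp x)" if "z \<in> Sg" for z
        using zb[OF that] .
      show "Complex x b \<in> Sg" "Complex x 0 \<in> Sg" unfolding Sg_def by auto
    qed
    also have "norm (Complex x b - Complex x 0) = \<bar>b\<bar>" by (simp add: cmod_def)
    finally show ?thesis .
  qed
  have lineK: "((\<lambda>x. K (Complex x b)) \<longlongrightarrow> cS) at_bot" for b
  proof -
    have "((\<lambda>x. K (Complex x b) - K (Complex x 0)) \<longlongrightarrow> 0) at_bot"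
    proof (rule Lim_null_comparison)
      show "\<forall>\<^sub>F x in at_bot. norm (K (Complex x b) - K (Complex x 0)) \<le> (Ck * (1 + \<bar>b\<bar>) powr \<bar>\<alpha>\<bar> * (\<bar>x\<bar> powr \<alpha> * exp x)) * \<bar>b\<bar>"
        unfolding eventually_at_bot_linorder using vert by blast
      show "((\<lambda>x. (Ck * (1 + \<bar>b\<bar>) powr \<bar>\<alpha>\<bar> * (\<bar>x\<bar> powr \<alpha> * exp x)) * \<bar>b\<bar>) \<longlongrightarrow> 0) at_bot"
        using tendsto_mult[OF tendsto_mult[OF tendsto_const powr_exp_at_bot[of \<alpha>]] tendsto_const[of "\<bar>b\<bar>"]] by simp
    qed
    then have "((\<lambda>x. (K (Complex x b) - K (Complex x 0)) + K (Complex x 0)) \<longlongrightarrow> 0 + L) at_bot"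
      by (intro tendsto_add L)
    then show ?thesis using cSL by simp
  qed
  have rayK: "norm (K (Complex a b) - cS) \<le> Mr * norm (Complex a b) powr \<alpha> * exp a"
    if H: "\<forall>x\<le>a. Complex x b \<in> U" for a b
  proof (rule Lim_norm_ubound[of at_bot "\<lambda>x. K (Complex a b) - K (Complex x b)"])
    show "((\<lambda>x. K (Complex a b) - K (Complex x b)) \<longlongrightarrow> K (Complex a b) - cS) at_bot"
      by (intro tendsto_intros lineK)
    show "\<forall>\<^sub>F x in at_bot. norm (K (Complex a b) - K (Complex x b)) \<le> Mr * norm (Complex a b) powr \<alpha> * exp a"
      unfolding eventually_at_bot_linorder using Mr[OF H] by blast
  qed simp
  define M' where "M' = (Ck * R1 + Mr) * 2 powr \<bar>\<alpha>\<bar> + Mr"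
  have M'0: "Mr \<le> M'" using Ck0 Mr0 R1 by (simp add: M'_def)
  have KS: "norm (K w - cS) \<le> M' * norm w powr \<alpha> * exp (Re w)" if w: "w \<in> G" "3 * R1 \<le> norm w" for w
  proof -
    define a where "a = Re w"
    define b where "b = Im w"
    have wab: "w = Complex a b" by (simp add: a_def b_def)
    have ra: "Re w = a" by (simp add: a_def)
    have Mle: "Mr * norm w powr \<alpha> * exp a \<le> M' * norm w powr \<alpha> * exp a"
      using M'0 by (intro mult_right_mono) auto
    consider (A) "a < 0" | (B) "a \<ge> 0" "R1 \<le> \<bar>b\<bar>" | (C) "a \<ge> 0" "\<bar>b\<bar> < R1" by linarith
    then show ?thesis
    proof cases
      case A
      have "\<forall>x\<le>a. Complex x b \<in> U"
      proof (intro allI impI)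
        fix x assume x: "x \<le> a"
        have "norm (Complex a b) \<le> norm (Complex x b)" using x A by (intro norm_Complex_mono) auto
        then have "R1 \<le> norm (Complex x b)" using w R1 wab by auto
        then show "Complex x b \<in> U" using x A by (intro UG) auto
      qed
      from rayK[OF this] have "norm (K w - cS) \<le> Mr * norm w powr \<alpha> * exp a" unfolding wab[symmetric] .
      with Mle show ?thesis unfolding ra by linarith
    next
      case B
      have "\<forall>x\<le>a. Complex x b \<in> U"
      proof (intro allI impI)
        fix x assume x: "x \<le> a"
        have "R1 \<le> norm (Complex x b)" using norm_Complex_ge_Im[of b x] B by linarith
        moreover have "b \<noteq> 0" using B R1 by auto
        ultimately show "Complex x b \<in> U" by (intro UG) auto
      qed
      from rayK[OF this] have "norm (K w - cS) \<le> Mr * norm w powr \<alpha> * exp a" unfolding wab[symmetric] .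
      with Mle show ?thesis unfolding ra by linarith
    next
      case C
      have bnz: "b \<noteq> 0" using w(1) C unfolding G_def Gdom_iff b_def a_def by auto
      define b' where "b' = (if b > 0 then R1 else - R1)"
      have ab': "\<bar>b'\<bar> = R1" using R1 by (simp add: b'_def)
      define w' where "w' = Complex a b'"
      have nw: "norm w \<le> a + \<bar>b\<bar>" using norm_Complex_le[of a b] wab C by simp
      have aw: "a \<le> norm w" using norm_Complex_ge_Re[of a b] wab by simp
      have a2: "norm w / 2 \<le> a" using nw C w by linarith
      have w'U: "\<forall>x\<le>a. Complex x b' \<in> U"
      proof (intro allI impI)
        fix x assume x: "x \<le> a"
        have "R1 \<le> norm (Complex x b')" using norm_Complex_ge_Im[of b' x] ab' by linarith
        moreover have "b' \<noteq> 0" using ab' R1 by auto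
        ultimately show "Complex x b' \<in> U" by (intro UG) auto
      qed
      have Kw': "norm (K w' - cS) \<le> Mr * norm w' powr \<alpha> * exp a" unfolding w'_def by (rule rayK[OF w'U])
      have nw'lo: "a \<le> norm w'" using norm_Complex_ge_Re[of a b'] C by (simp add: w'_def)
      have nw'hi: "norm w' \<le> a + R1" using norm_Complex_le[of a b'] C ab' by (simp add: w'_def)
      have wpos: "0 < norm w" using w R1 by linarith
      have cmp: "norm z powr \<alpha> \<le> 2 powr \<bar>\<alpha>\<bar> * norm w powr \<alpha>" if "a \<le> norm z" "norm z \<le> a + R1" for z
        by (rule powr_compare(1)[OF wpos]) (use that a2 aw w in auto)
      have segU: "z \<in> U" and segb: "norm (\<kappa> z) \<le> Ck * (2 powr \<bar>\<alpha>\<bar> * norm w powr \<alpha>) * exp a"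
        if z: "z \<in> closed_segment w w'" for z
      proof -
        have vz: "Re z = a \<and> min b b' \<le> Im z \<and> Im z \<le> max b b'"
          using vseg z unfolding wab w'_def by blast
        have imz: "Im z \<noteq> 0 \<and> \<bar>Im z\<bar> \<le> R1"
          using vz bnz C R1 by (auto simp: b'_def min_def max_def split: if_splits)
        have zlo: "a \<le> norm z" using abs_Re_le_cmod[of z] vz C by simp
        have zhi: "norm z \<le> a + R1" using cmod_le[of z] vz imz C by simp
        show zU: "z \<in> U" using zlo a2 w imz R1 by (intro UG) auto
        have "norm (\<kappa> z) \<le> Ck * norm z powr \<alpha> * exp a" using \<kappa>b[OF zU] vz by simp
        also have "\<dots> \<le> Ck * (2 powr \<bar>\<alpha>\<bar> * norm w powr \<alpha>) * exp a"
          using cmp[OF zlo zhi] Ck0 by (intro mult_right_mono mult_left_mono) auto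
        finally show "norm (\<kappa> z) \<le> Ck * (2 powr \<bar>\<alpha>\<bar> * norm w powr \<alpha>) * exp a" .
      qed
      have "norm (K w - K w') \<le> (Ck * (2 powr \<bar>\<alpha>\<bar> * norm w powr \<alpha>) * exp a) * norm (w - w')"
      proof (rule field_differentiable_bound[of "closed_segment w w'"])
        show "(K has_field_derivative \<kappa> z) (at z within closed_segment w w')" if "z \<in> closed_segment w w'" for z
          using \<kappa>d[OF segU[OF that]] by (rule has_field_derivative_at_within)
      qed (use segb in auto)
      also have "norm (w - w') \<le> R1"
      proof -
        have "w - w' = Complex 0 (b - b')" by (simp add: wab w'_def complex_eq_iff)
        then have "norm (w - w') = \<bar>b - b'\<bar>" by (simp add: cmod_def)
        also have "\<dots> \<le> R1" using C bnz R1 by (auto simp: b'_def)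
        finally show ?thesis .
      qed
      then have "(Ck * (2 powr \<bar>\<alpha>\<bar> * norm w powr \<alpha>) * exp a) * norm (w - w') \<le> (Ck * (2 powr \<bar>\<alpha>\<bar> * norm w powr \<alpha>) * exp a) * R1"
        using Ck0 by (intro mult_left_mono) auto
      finally have A1': "norm (K w - K w') \<le> (Ck * (2 powr \<bar>\<alpha>\<bar> * norm w powr \<alpha>) * exp a) * R1" .
      have A2': "norm (K w' - cS) \<le> Mr * (2 powr \<bar>\<alpha>\<bar> * norm w powr \<alpha>) * exp a"
      proof -
        have "Mr * norm w' powr \<alpha> * exp a \<le> Mr * (2 powr \<bar>\<alpha>\<bar> * norm w powr \<alpha>) * exp a"
          using cmp[OF nw'lo nw'hi] Mr0 by (intro mult_right_mono mult_left_mono) auto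
        then show ?thesis using Kw' by linarith
      qed
      have "norm (K w - cS) \<le> norm (K w - K w') + norm (K w' - cS)" using norm_triangle_ineq[of "K w - K w'" "K w' - cS"] by simp
      also have "\<dots> \<le> (Ck * R1 + Mr) * 2 powr \<bar>\<alpha>\<bar> * norm w powr \<alpha> * exp a"
        using A1' A2' by (simp add: algebra_simps)
      also have "\<dots> \<le> M' * norm w powr \<alpha> * exp a"
        using Mr0 by (intro mult_right_mono) (auto simp: M'_def)
      finally show ?thesis unfolding ra .
    qed
  qed
  define E where "E = (\<lambda>w. (K w - cS) * exp (- w) * poly Q1 (\<phi> w) / poly p (\<phi> w)
      - (poly A1 (\<phi> w) / (poly p (\<phi> w) * poly Q1 (\<phi> w) ^ 2) + lam / w))"
  define R2 where "R2 = 3 * R1"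
  have R2: "R1 \<le> R2" "1 \<le> R2" using R1 by (auto simp: R2_def)
  have evG: "eventually P (inf at_infinity (principal (Gdom R)))"
    if H: "\<And>w. w \<in> G \<Longrightarrow> R2 \<le> norm w \<Longrightarrow> P w" for P
    unfolding eventually_inf_principal eventually_at_infinity using H G_def by blast
  have eqn: "newton_f p q c (\<phi> w) =
      \<phi> w - (1 / poly (pderiv q) (\<phi> w)) * (1 + lam / w + E w) - cS * exp (- w) / poly p (\<phi> w)"
    if w: "w \<in> G" "R2 \<le> norm w" for w
  proof -
    have w1: "R1 \<le> norm w" using w R2 by linarith
    define t where "t = \<phi> w"
    have Pn: "poly p t \<noteq> 0" using pnz_w[OF w(1) w1] by (simp add: t_def)
    have Qn: "poly Q1 t \<noteq> 0" using Q1nz[OF w(1)] by (simp add: t_def)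
    have wq: "poly q t = w" using q\<phi>[OF w(1)] by (simp add: t_def)
    have wn: "w \<noteq> 0" using w R2 by auto
    have g: "gfun p q c t = K w + r t * exp w" by (simp add: K_def t_def)
    have "newton_f p q c t = t - (K w + (poly p t / poly Q1 t - poly A1 t / poly Q1 t ^ 3) * exp w) / (poly p t * exp w)"
      unfolding newton_f_def g wq by (simp add: r_def)
    also have "\<dots> = t - (1 / poly Q1 t) * (1 + lam / w + ((K w - cS) * (1 / exp w) * poly Q1 t / poly p t
          - (poly A1 t / (poly p t * poly Q1 t ^ 2) + lam / w))) - cS * (1 / exp w) / poly p t"
      by (rule alg_identity) (use Pn Qn wn in auto)
    also have "\<dots> = t - (1 / poly (pderiv q) t) * (1 + lam / w + E w) - cS * exp (- w) / poly p t"
      by (simp add: E_def t_def Q1_def exp_minus inverse_eq_divide)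
    finally show ?thesis by (simp add: t_def)
  qed
  have Ebound: "norm (E w) \<le> (M' / cu + Cn) * norm w powr (-1 - 1 / real d)"
    if w: "w \<in> G" "R2 \<le> norm w" for w
  proof -
    have w1: "R1 \<le> norm w" using w R2 by linarith
    have w3: "3 * R1 \<le> norm w" using w by (simp add: R2_def)
    define t where "t = \<phi> w"
    have Pn: "poly p t \<noteq> 0" using pnz_w[OF w(1) w1] by (simp add: t_def)
    have Qn: "poly Q1 t \<noteq> 0" using Q1nz[OF w(1)] by (simp add: t_def)
    have wpos: "0 < norm w" using w R2 by linarith
    have ksb: "norm (K w - cS) \<le> M' * norm w powr \<alpha> * exp (Re w)" using KS[OF w(1) w3] .
    have ub: "cu * norm w powr \<beta> \<le> norm (poly p t / poly Q1 t)" using UB[OF w(1) w1] by (simp add: t_def)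
    have M'pos: "0 \<le> M'" using M'0 Mr0 by linarith
    have e1: "norm ((K w - cS) * exp (- w) * poly Q1 t / poly p t) \<le> (M' / cu) * norm w powr (-1 - 1 / real d)"
    proof -
      have "norm ((K w - cS) * exp (- w) * poly Q1 t / poly p t)
          = (norm (K w - cS) * exp (- Re w)) / norm (poly p t / poly Q1 t)"
        using Pn Qn by (simp add: norm_mult norm_divide)
      also have "\<dots> \<le> (M' * norm w powr \<alpha> * exp (Re w) * exp (- Re w)) / (cu * norm w powr \<beta>)"
        by (rule frac_le) (use ksb ub cu0 wpos M'pos in \<open>auto intro: mult_right_mono\<close>)
      also have "\<dots> = (M' / cu) * norm w powr (\<alpha> - \<beta>)"
        using cu0 wpos by (simp add: powr_diff exp_minus field_simps)
      also have "\<alpha> - \<beta> = -2" using dpos by (simp add: \<alpha>_def \<beta>_def field_simps)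
      also have "(M' / cu) * norm w powr (-2) \<le> (M' / cu) * norm w powr (-1 - 1 / real d)"
      proof -
        have "1 / real d \<le> 1" using d1 by simp
        then have "norm w powr (-2) \<le> norm w powr (-1 - 1 / real d)"
          using w R2 by (intro powr_mono) auto
        then show ?thesis using M'pos cu0 by (intro mult_left_mono) auto
      qed
      finally show ?thesis .
    qed
    have e2: "norm (poly A1 t / (poly p t * poly Q1 t ^ 2) + lam / w) \<le> Cn * norm w powr (-1 - 1 / real d)"
      using NB[OF w(1) w1] by (simp add: t_def)
    have "norm (E w) \<le> norm ((K w - cS) * exp (- w) * poly Q1 t / poly p t)
        + norm (poly A1 t / (poly p t * poly Q1 t ^ 2) + lam / w)"
      unfolding E_def t_def by (rule norm_triangle_ineq4)
    also have "\<dots> \<le> (M' / cu) * norm w powr (-1 - 1 / real d) + Cn * norm w powr (-1 - 1 / real d)"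
      using e1 e2 by linarith
    also have "\<dots> = (M' / cu + Cn) * norm w powr (-1 - 1 / real d)" by (simp add: algebra_simps)
    finally show ?thesis .
  qed
  show ?thesis
  proof (intro exI conjI)
    show "E \<in> O[inf at_infinity (principal (Gdom R))](\<lambda>w. complex_of_real (norm w powr (-1 - 1 / real d)))"
    proof (rule bigoI[where c = "M' / cu + Cn"])
      show "\<forall>\<^sub>F x in inf at_infinity (principal (Gdom R)).
          norm (E x) \<le> (M' / cu + Cn) * norm (complex_of_real (norm x powr (-1 - 1 / real d)))"
        by (rule evG) (use Ebound in simp)
    qed
    show "\<forall>\<^sub>F w in inf at_infinity (principal (Gdom R)).
        newton_f p q c (\<phi> w) = \<phi> w - (1 / poly (pderiv q) (\<phi> w)) * (1 + lam / w + E w) - cS * exp (- w) / poly p (\<phi> w)"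
      by (rule evG) (rule eqn)
  qed
qed


end
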